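(* Let $n\ge3$ be an integer, $a\ge1$ real, and $x_0\in(0,\pi)$ with $S_{n,a}(x_0)=S_{n-2,a}(x_0)$. Then $a=1$ and $\phi_n(x_0)=0$.
   Context: For a real number $a$ and integers $0\le m$, $\binom{m+a}{m}=\frac{(a+1)(a+2)\cdots(a+m)}{m!}$ (equal to $1$ when $m=0$). For an integer $n\ge1$, $S_{n,a}(x)=\sum_{j=1}^n\binom{n+a-j}{n-j}\sin(jx)$, and $\phi_n(x)=2\sum_{j=1}^{n-1}\sin(jx)+\sin(nx)$. *)

theory Defs
  imports Complex_Main
begin

text \<open>binom m a = ((a+1)(a+2)...(a+m))/m!, i.e. the generalized binomial coefficient (m+a choose m).\<close>
definition binom_gen :: "nat \<Rightarrow> real \<Rightarrow> real" where
  "binom_gen m a = (\<Prod>i=1..m. (a + real i)) / fact m"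

definition S :: "nat \<Rightarrow> real \<Rightarrow> real \<Rightarrow> real" where
  "S n a x = (\<Sum>j=1..n. binom_gen (n - j) a * sin (real j * x))"

definition phi :: "nat \<Rightarrow> real \<Rightarrow> real" where
  "phi n x = 2 * (\<Sum>j=1..n-1. sin (real j * x)) + sin (real n * x)"

end

theory Submission
  imports Defs
begin

lemma bg0[simp]: "binom_gen 0 c = 1"
  by (simp add: binom_gen_def)

lemma prod_shift: "(\<Prod>i=1..Suc m. (c - 1 + real i)) = c * (\<Prod>i=1..m. (c + real i))"
  by (induction m) (simp_all add: algebra_simps)

lemma bg_Suc: "binom_gen (Suc m) c = binom_gen m c * (c + real (Suc m)) / real (Suc m)"
  by (simp add: binom_gen_def field_simps)

lemma bg_Suc_minus: "binom_gen (Suc m) (c - 1) = binom_gen m c * c / real (Suc m)"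
  unfolding binom_gen_def using prod_shift[where m=m and c=c]
  by (simp add: field_simps del: prod.cl_ivl_Suc)

lemma pascal: "binom_gen (Suc m) c = binom_gen (Suc m) (c - 1) + binom_gen m c"
  by (simp only: bg_Suc_minus bg_Suc[where c=c]) (simp add: field_simps)

lemma hockey: "(\<Sum>i=0..k. binom_gen i (c - 1)) = binom_gen k c"
proof (induction k)
  case 0 then show ?case by simp
next
  case (Suc k) then show ?case using pascal[where m=k and c=c] by simp
qed

lemma gk: "binom_gen k a - (if 2 \<le> k then binom_gen (k-2) a else 0)
   = (\<Sum>i=0..k. binom_gen i (a - 1 - 1) * (if k - i = 0 then 1 else 2))"
proof (cases k)
  case 0 then show ?thesis by simp
next
  case (Suc m)
  have L: "binom_gen k a - (if 2 \<le> k then binom_gen (k-2) a else 0)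
       = binom_gen (Suc m) (a-1) + binom_gen m (a-1)"
  proof (cases m)
    case 0 then show ?thesis using Suc pascal[where m=0 and c=a] by simp
  next
    case (Suc p)
    show ?thesis using \<open>k = Suc m\<close> Suc pascal[where m="Suc p" and c=a] pascal[where m=p and c=a] by simp
  qed
  have "(\<Sum>i=0..k. binom_gen i (a - 1 - 1) * (if k - i = 0 then 1 else 2))
      = (\<Sum>i=0..m. binom_gen i (a - 1 - 1) * 2) + binom_gen (Suc m) (a - 1 - 1)"
    using Suc by (simp add: sum.atLeast0_atMost_Suc del: sum.cl_ivl_Suc)
  also have "\<dots> = 2 * binom_gen m (a-1) + binom_gen (Suc m) (a - 1 - 1)"
    using hockey[where k=m and c="a-1"] by (simp add: sum_distrib_right[symmetric])
  also have "\<dots> = binom_gen (Suc m) (a-1) + binom_gen m (a-1)"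
    using pascal[where m=m and c="a-1"] by simp
  finally show ?thesis using L by simp
qed

lemma conv_swap:
  fixes u v w :: "nat \<Rightarrow> real"
  shows "(\<Sum>j=1..n. (\<Sum>i=0..n-j. u i * v (n-j-i)) * w j)
       = (\<Sum>i=0..n. u i * (\<Sum>j=1..n-i. v (n-i-j) * w j))"
proof -
  have A: "\<And>j. j \<le> n \<Longrightarrow> {0..n-j} = {i\<in>{0..n}. i + j \<le> n}" by auto
  have B: "\<And>i. {1..n-i} = {j\<in>{1..n}. i + j \<le> n}" by auto
  have "(\<Sum>j=1..n. (\<Sum>i=0..n-j. u i * v (n-j-i)) * w j)
      = (\<Sum>j\<in>{1..n}. \<Sum>i\<in>{0..n}. if i + j \<le> n then u i * v (n-i-j) * w j else 0)"
  proof (rule sum.cong)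
    fix j assume j: "j \<in> {1..n}"
    have "(\<Sum>i=0..n-j. u i * v (n-j-i)) * w j = (\<Sum>i\<in>{i\<in>{0..n}. i + j \<le> n}. u i * v (n-i-j) * w j)"
    proof -
      have A': "{0..n-j} = {i\<in>{0..n}. i + j \<le> n}" using j A by auto
      show ?thesis unfolding A' by (simp add: sum_distrib_right add.commute del: sum.cl_ivl_Suc)
    qed
    also have "\<dots> = (\<Sum>i\<in>{0..n}. if i + j \<le> n then u i * v (n-i-j) * w j else 0)"
      by (rule sum.inter_filter) simp
    finally show "(\<Sum>i=0..n-j. u i * v (n-j-i)) * w j = (\<Sum>i\<in>{0..n}. if i + j \<le> n then u i * v (n-i-j) * w j else 0)" .
  qed simp
  also have "\<dots> = (\<Sum>i\<in>{0..n}. \<Sum>j\<in>{1..n}. if i + j \<le> n then u i * v (n-i-j) * w j else 0)"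
    by (rule sum.swap)
  also have "\<dots> = (\<Sum>i=0..n. u i * (\<Sum>j=1..n-i. v (n-i-j) * w j))"
  proof (rule sum.cong)
    fix i assume i: "i \<in> {0..n}"
    have "u i * (\<Sum>j=1..n-i. v (n-i-j) * w j) = (\<Sum>j\<in>{j\<in>{1..n}. i + j \<le> n}. u i * v (n-i-j) * w j)"
      unfolding B[of i] by (simp add: sum_distrib_left mult.assoc del: sum.cl_ivl_Suc)
    also have "\<dots> = (\<Sum>j\<in>{1..n}. if i + j \<le> n then u i * v (n-i-j) * w j else 0)"
      by (rule sum.inter_filter) simp
    finally show "(\<Sum>j\<in>{1..n}. if i + j \<le> n then u i * v (n-i-j) * w j else 0) = u i * (\<Sum>j=1..n-i. v (n-i-j) * w j)" by simp
  qed simp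
  finally show ?thesis .
qed

lemma tsum: "2 * sin (x/2) * (\<Sum>j=1..m. sin (real j * x)) = cos (x/2) - cos ((2 * real m + 1) * x / 2)"
proof (induction m)
  case 0 then show ?case by simp
next
  case (Suc m)
  have "2 * sin (x/2) * sin (real (Suc m) * x) = cos ((2 * real m + 1) * x / 2) - cos ((2 * real (Suc m) + 1) * x / 2)"
  proof -
    have e1: "x/2 - real (Suc m) * x = -((2 * real m + 1) * x / 2)" by (simp add: field_simps)
    have e2: "x/2 + real (Suc m) * x = (2 * real (Suc m) + 1) * x / 2" by (simp add: field_simps)
    show ?thesis unfolding mult.assoc sin_times_sin e1 e2 cos_minus by simp
  qed
  then show ?case using Suc by (simp add: algebra_simps)
qed

lemma phi_nonneg:
  assumes "0 < x" "x < pi" "m \<ge> 1"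
  shows "phi m x \<ge> 0"
proof -
  have s: "sin (x/2) > 0" using assms by (intro sin_gt_zero) auto
  have c: "cos (x/2) > 0" using assms by (intro cos_gt_zero) auto
  have eq: "phi m x = (\<Sum>j=1..m. sin (real j * x)) + (\<Sum>j=1..m-1. sin (real j * x))"
    using assms(3) by (cases m) (simp_all add: phi_def)
  have "2 * sin (x/2) * phi m x = 2 * cos (x/2) - cos ((2 * real m + 1) * x / 2) - cos ((2 * real (m-1) + 1) * x / 2)"
    unfolding eq distrib_left tsum by simp
  also have "\<dots> = 2 * cos (x/2) - cos (real m * x + x/2) - cos (real m * x - x/2)"
    using assms(3) by (simp add: of_nat_diff algebra_simps add_divide_distrib diff_divide_distrib)
  also have "\<dots> = 2 * cos (x/2) * (1 - cos (real m * x))"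
    by (simp add: cos_add cos_diff algebra_simps)
  finally have "2 * sin (x/2) * phi m x = 2 * cos (x/2) * (1 - cos (real m * x))" .
  moreover have "2 * cos (x/2) * (1 - cos (real m * x)) \<ge> 0" using c by simp
  ultimately have h: "0 \<le> sin (x/2) * phi m x" by simp
  show ?thesis using s h by (simp add: zero_le_mult_iff)
qed

lemma S_shift:
  assumes "n = Suc (Suc m)"
  shows "S m a x = (\<Sum>j=1..n. (if 2 \<le> n-j then binom_gen (n-j-2) a else 0) * sin (real j * x))"
proof -
  have "(\<Sum>j=1..n. (if 2 \<le> n-j then binom_gen (n-j-2) a else 0) * sin (real j * x))
     = (\<Sum>j=1..m. (if 2 \<le> n-j then binom_gen (n-j-2) a else 0) * sin (real j * x))"
    using assms by simp
  also have "\<dots> = S m a x" unfolding S_def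
    by (rule sum.cong) (use assms in auto)
  finally show ?thesis by simp
qed

theorem mainTheorem5:
  fixes n :: nat and a x0 :: real
  assumes "n \<ge> 3" and "a \<ge> 1" and "0 < x0" and "x0 < pi"
    and "S n a x0 = S (n - 2) a x0"
  shows "a = 1 \<and> phi n x0 = 0"
proof -
  define e where "e i = binom_gen i (a - 1 - 1)" for i
  define h where "h l = (if l = 0 then 1 else (2::real))" for l :: nat
  define P where "P m = (\<Sum>j=1..m. h (m-j) * sin (real j * x0))" for m
  obtain m where nm: "n = Suc (Suc m)" using assms(1) by (metis add_2_eq_Suc le_Suc_ex numeral_3_eq_3 le_SucE Suc_le_D le_add1)
  have P_phi: "P k = phi k x0" if k1: "k \<ge> 1" for k
  proof -
    obtain q where q: "k = Suc q" using k1 by (cases k) auto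
    have "P k = (\<Sum>j=1..q. 2 * sin (real j * x0)) + sin (real k * x0)"
    proof -
      have "(\<Sum>j=1..q. h (Suc q - j) * sin (real j * x0)) = (\<Sum>j=1..q. 2 * sin (real j * x0))"
        by (rule sum.cong) (auto simp: h_def)
      then show ?thesis unfolding P_def q by (simp add: h_def)
    qed
    then show ?thesis unfolding phi_def q by (simp add: sum_distrib_left)
  qed
  have P_nonneg: "P k \<ge> 0" for k
  proof (cases k)
    case 0 then show ?thesis by (simp add: P_def)
  next
    case (Suc q) then show ?thesis using P_phi[of k] phi_nonneg[of x0 k] assms by simp
  qed
  have "S n a x0 - S (n-2) a x0 = (\<Sum>j=1..n. (binom_gen (n-j) a - (if 2 \<le> n-j then binom_gen (n-j-2) a else 0)) * sin (real j * x0))"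
    using S_shift[OF nm, of a x0] nm by (simp add: S_def left_diff_distrib sum_subtractf)
  also have "\<dots> = (\<Sum>j=1..n. (\<Sum>i=0..n-j. e i * h (n-j-i)) * sin (real j * x0))"
    unfolding gk e_def h_def by simp
  also have "\<dots> = (\<Sum>i=0..n. e i * P (n-i))"
    unfolding P_def by (rule conv_swap)
  finally have D: "S n a x0 - S (n-2) a x0 = (\<Sum>i=0..n. e i * P (n-i))" .
  have e_nonneg: "e i \<ge> 0" for i
    unfolding e_def binom_gen_def using assms(2) by (intro divide_nonneg_pos prod_nonneg) auto
  have a1: "a = 1"
  proof (rule ccontr)
    assume "a \<noteq> 1"
    then have "a > 1" using assms(2) by simp
    then have epos: "e (n-1) > 0"
      unfolding e_def binom_gen_def by (intro divide_pos_pos prod_pos) auto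
    have P1: "P 1 > 0" using P_phi[of 1] assms(3,4) by (simp add: phi_def sin_gt_zero)
    have "e (n-1) * P (n - (n-1)) \<le> (\<Sum>i=0..n. e i * P (n-i))"
      by (rule member_le_sum) (auto intro: mult_nonneg_nonneg e_nonneg P_nonneg)
    moreover have "e (n-1) * P (n - (n-1)) > 0" using epos P1 assms(1) by simp
    ultimately show False using D assms(5) by simp
  qed
  have e0: "e i = (if i = 0 then 1 else 0)" for i
  proof (cases i)
    case 0 then show ?thesis by (simp add: e_def)
  next
    case (Suc q)
    have "(\<Prod>l=1..i. (a - 1 - 1 + real l)) = 0"
      using a1 Suc by (intro prod_zero bexI[of _ 1]) auto
    then show ?thesis using Suc by (simp add: e_def binom_gen_def)
  qed
  have "(\<Sum>i=0..n. e i * P (n-i)) = P n"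
    unfolding e0 by (simp add: sum.atLeast0_atMost_Suc_shift nm del: sum.cl_ivl_Suc)
  then have "phi n x0 = 0" using D assms(1,5) P_phi[of n] by simp
  then show ?thesis using a1 by simp
qed

end
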